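(* Consider the discrete-time system $$x(t+1)=A\,Z(x(t))+B\,u(t)+w(t),\qquad Z(x)=\begin{bmatrix}x\\ S(x)\end{bmatrix}\in\mathbb{R}^{n+N},$$ with $A=[A_1\ \ A_2]$, $A_1\in\mathbb{R}^{n\times n}$, $A_2\in\mathbb{R}^{n\times N}$, $B\in\mathbb{R}^{n\times m}$, where $S:\mathbb{R}^n\to\mathbb{R}^N$ is differentiable at $0$. Let $A_s=\frac{\partial S}{\partial x}(0)\in\mathbb{R}^{N\times n}$, $Q(x)=S(x)-A_s x$ and $\bar A_1=A_1+A_2A_s$. Suppose input-state data have been collected from this system: inputs $u(0),\dots,u(T-1)$ were applied, producing states $x(0),\dots,x(T)$ under (unmeasured) disturbances $w(0),\dots,w(T-1)$, and form $U_0=[u(0)\ \cdots\ u(T-1)]\in\mathbb{R}^{m\times T}$, $X_0=[x(0)\ \cdots\ x(T-1)]\in\mathbb{R}^{n\times T}$, $X_1=[x(1)\ \cdots\ x(T)]\in\mathbb{R}^{n\times T}$, $W_0=[w(0)\ \cdots\ w(T-1)]\in\mathbb{R}^{n\times T}$, and $V_0=\begin{bmatrix}X_0\\ Q(X_0)\end{bmatrix}\in\mathbb{R}^{(n+N)\times T}$, where $Q(X_0)=[Q(x(0))\ \cdots\ Q(x(T-1))]$. Let $G_K=[G_{K,1}\ \ G_{K,2}]$ with $G_{K,1}\in\mathbb{R}^{T\times n}$, $G_{K,2}\in\mathbb{R}^{T\times N}$ satisfy $V_0G_K=I$, and set $K_1=U_0G_{K,1}$, $K_2=U_0G_{K,2}$.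 Then under the controller $u(t)=K_1x(t)+K_2Q(x(t))$ the closed-loop system satisfies $$x(t+1)=(X_1-W_0)G_{K,1}\,x(t)+(X_1-W_0)G_{K,2}\,Q(x(t))+w(t).$$ Moreover, if $V_0$ has full row rank and $T\ge n+N+1$, then a matrix $G_K$ with $V_0G_K=I$ exists and is not unique.
   Context: All inequalities and dimensions are as stated; $I$ denotes the identity matrix of appropriate dimension. The matrices $A$, $B$ are unknown; $S$ (hence $Z$ and $Q$) is known. $w(t)$ in the closed-loop equation denotes the disturbance acting at time $t$ during closed-loop operation, while $W_0$ is the disturbance sequence that acted during data collection. *)

theory Defs
  imports "HOL-Analysis.Analysis"
begin

definition vstack :: "real^'n::finite \<Rightarrow> real^'k::finite \<Rightarrow> real^('n + 'k)" where
  "vstack a b = (\<chi> r. case r of Inl i \<Rightarrow> a $ i | Inr j \<Rightarrow> b $ j)"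

definition mstack :: "real^'c^'r1::finite \<Rightarrow> real^'c^'r2::finite \<Rightarrow> real^'c^('r1 + 'r2)" where
  "mstack M P = (\<chi> r. case r of Inl i \<Rightarrow> M $ i | Inr j \<Rightarrow> P $ j)"

definition lcols :: "real^('c1::finite + 'c2::finite)^'r \<Rightarrow> real^'c1^'r" where
  "lcols M = (\<chi> i j. M $ i $ Inl j)"

definition rcols :: "real^('c1::finite + 'c2::finite)^'r \<Rightarrow> real^'c2^'r" where
  "rcols M = (\<chi> i j. M $ i $ Inr j)"

end

theory Submission imports Defs begin

lemma sum_UNIV_plus: "(\<Sum>r\<in>(UNIV::('a::finite + 'b::finite) set). f r) = (\<Sum>i\<in>UNIV. f (Inl i)) + (\<Sum>j\<in>UNIV. f (Inr j))"
  by (subst UNIV_Plus_UNIV[symmetric], subst sum.Plus) auto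

lemma lr_cols: "lcols G *v a + rcols G *v b = G *v vstack a b"
  by (simp add: vec_eq_iff matrix_vector_mult_def lcols_def rcols_def vstack_def sum_UNIV_plus)

definition col :: "('T::finite \<Rightarrow> nat) \<Rightarrow> (nat \<Rightarrow> real^'k) \<Rightarrow> real^'T^'k" where
  "col idx f = (\<chi> i j. f (idx j) $ i)"

lemma mult_col: "P ** col idx f = col idx (\<lambda>t. P *v f t)"
  by (simp add: vec_eq_iff matrix_matrix_mult_def matrix_vector_mult_def col_def)

lemma col_add: "col idx f + col idx g = col idx (\<lambda>t. f t + g t)"
  by (simp add: vec_eq_iff col_def)

lemma col_diff: "col idx f - col idx g = col idx (\<lambda>t. f t - g t)"
  by (simp add: vec_eq_iff col_def)

lemma col_cong: "(\<And>j. f (idx j) = g (idx j)) \<Longrightarrow> col idx f = col idx g"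
  by (simp add: col_def)

lemma my_rdistrib: "((P::real^'b^'a) + R) ** (C::real^'c^'b) = P ** C + R ** C"
  by (simp add: vec_eq_iff matrix_matrix_mult_def sum.distrib distrib_right)

definition Mm :: "real^'n^'q \<Rightarrow> real^('n::finite + 'q::finite)^('n + 'q)" where
  "Mm As = (\<chi> r c. case r of Inl i \<Rightarrow> (case c of Inl k \<Rightarrow> if i = k then 1 else 0 | Inr _ \<Rightarrow> 0)
      | Inr j \<Rightarrow> (case c of Inl k \<Rightarrow> As$j$k | Inr l \<Rightarrow> if j = l then 1 else 0))"

lemma ifmul: "(if a = b then 1 else 0) * (c::real) = (if a = b then c else 0)" by simp

lemma Mm_v: "Mm As *v vstack y (S y - As *v y) = vstack y (S y)"
  by (auto simp add: vec_eq_iff matrix_vector_mult_def Mm_def vstack_def sum_UNIV_plus ifmul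
     split: sum.split)

theorem lemma1:
  fixes A :: "real^('n::finite + 'q::finite)^'n"
    and B :: "real^'m::finite^'n"
    and S :: "real^'n \<Rightarrow> real^'q"
    and As :: "real^'n^'q"
    and Q :: "real^'n \<Rightarrow> real^'q"
    and x :: "nat \<Rightarrow> real^'n" and u :: "nat \<Rightarrow> real^'m" and w :: "nat \<Rightarrow> real^'n"
    and idx :: "'T::finite \<Rightarrow> nat"
    and U0 :: "real^'T^'m" and X0 X1 W0 :: "real^'T^'n" and V0 :: "real^'T^('n + 'q)"
  assumes S_deriv: "(S has_derivative (\<lambda>h. As *v h)) (at 0)"
    and Q_def: "\<And>y. Q y = S y - As *v y"
    and idx: "bij_betw idx UNIV {..<CARD('T)}"
    and data: "\<And>t. t < CARD('T) \<Longrightarrow> x (Suc t) = A *v vstack (x t) (S (x t)) + B *v u t + w t"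
    and U0_def: "U0 = (\<chi> i j. u (idx j) $ i)"
    and X0_def: "X0 = (\<chi> i j. x (idx j) $ i)"
    and X1_def: "X1 = (\<chi> i j. x (Suc (idx j)) $ i)"
    and W0_def: "W0 = (\<chi> i j. w (idx j) $ i)"
    and V0_def: "V0 = mstack X0 (\<chi> i j. Q (x (idx j)) $ i)"
  shows
    "(\<forall>GK :: real^('n + 'q)^'T. V0 ** GK = mat 1 \<longrightarrow>
       (let K1 = U0 ** lcols GK; K2 = U0 ** rcols GK in
        \<forall>(xc :: nat \<Rightarrow> real^'n) (wc :: nat \<Rightarrow> real^'n).
          (\<forall>t. xc (Suc t) = A *v vstack (xc t) (S (xc t))
                  + B *v (K1 *v xc t + K2 *v Q (xc t)) + wc t) \<longrightarrow>
          (\<forall>t. xc (Suc t) = ((X1 - W0) ** lcols GK) *v xc t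
                  + ((X1 - W0) ** rcols GK) *v Q (xc t) + wc t)))
   \<and> (rank V0 = CARD('n + 'q) \<and> CARD('T) \<ge> CARD('n) + CARD('q) + 1 \<longrightarrow>
       (\<exists>GK :: real^('n + 'q)^'T. V0 ** GK = mat 1)
       \<and> \<not> (\<exists>!GK :: real^('n + 'q)^'T. V0 ** GK = mat 1))"
proof -
  let ?Zf = "\<lambda>y. vstack y (S y)"
  let ?Vf = "\<lambda>y. vstack y (Q y)"
  have idxlt: "idx j < CARD('T)" for j using idx by (auto simp: bij_betw_def)
  have V0c: "V0 = col idx (\<lambda>t. ?Vf (x t))"
    by (auto simp: V0_def X0_def mstack_def col_def vstack_def vec_eq_iff split: sum.split)
  have MV: "Mm As *v ?Vf y = ?Zf y" for y using Mm_v[of As y S] Q_def by simp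
  have "X1 - W0 = col idx (\<lambda>t. x (Suc t) - w t)"
    by (simp add: X1_def W0_def col_def vec_eq_iff)
  also have "\<dots> = col idx (\<lambda>t. A *v ?Zf (x t) + B *v u t)"
    by (rule col_cong) (simp add: data[OF idxlt])
  also have "\<dots> = A ** Mm As ** V0 + B ** U0"
    by (simp add: V0c U0_def mult_col col_add MV matrix_vector_mul_assoc[symmetric] col_def[symmetric])
  finally have XW: "X1 - W0 = A ** Mm As ** V0 + B ** U0" .
  have P1: "\<forall>GK :: real^('n + 'q)^'T. V0 ** GK = mat 1 \<longrightarrow>
       (let K1 = U0 ** lcols GK; K2 = U0 ** rcols GK in
        \<forall>(xc :: nat \<Rightarrow> real^'n) (wc :: nat \<Rightarrow> real^'n).
          (\<forall>t. xc (Suc t) = A *v vstack (xc t) (S (xc t))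
                  + B *v (K1 *v xc t + K2 *v Q (xc t)) + wc t) \<longrightarrow>
          (\<forall>t. xc (Suc t) = ((X1 - W0) ** lcols GK) *v xc t
                  + ((X1 - W0) ** rcols GK) *v Q (xc t) + wc t))"
  proof (intro allI impI, unfold Let_def, intro allI impI)
    fix GK :: "real^('n + 'q)^'T" and xc wc :: "nat \<Rightarrow> real^'n" and t
    assume G: "V0 ** GK = mat 1"
    assume cl: "\<forall>t. xc (Suc t) = A *v vstack (xc t) (S (xc t))
                  + B *v ((U0 ** lcols GK) *v xc t + (U0 ** rcols GK) *v Q (xc t)) + wc t"
    have e: "(P ** lcols GK) *v a + (P ** rcols GK) *v b = P *v (GK *v vstack a b)"
      for P :: "real^'T^'n" and a b
      using lr_cols[of GK a b]
      by (metis matrix_vector_mul_assoc matrix_vector_right_distrib)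
    have e2: "(P ** lcols GK) *v a + (P ** rcols GK) *v b = P *v (GK *v vstack a b)"
      for P :: "real^'T^'m" and a b
      using lr_cols[of GK a b]
      by (metis matrix_vector_mul_assoc matrix_vector_right_distrib)
    have "((X1 - W0) ** lcols GK) *v xc t + ((X1 - W0) ** rcols GK) *v Q (xc t)
        = (X1 - W0) *v (GK *v ?Vf (xc t))" by (rule e)
    also have "\<dots> = A *v (Mm As *v ((V0 ** GK) *v ?Vf (xc t))) + B *v (U0 *v (GK *v ?Vf (xc t)))"
      by (simp add: XW my_rdistrib matrix_mul_assoc matrix_vector_mult_add_rdistrib matrix_vector_mul_assoc)
    also have "\<dots> = A *v ?Zf (xc t) + B *v ((U0 ** lcols GK) *v xc t + (U0 ** rcols GK) *v Q (xc t))"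
      by (simp add: G MV e2)
    finally show "xc (Suc t) = ((X1 - W0) ** lcols GK) *v xc t
                  + ((X1 - W0) ** rcols GK) *v Q (xc t) + wc t"
      using cl by simp
  qed
  have P2: "(\<exists>GK :: real^('n + 'q)^'T. V0 ** GK = mat 1)
       \<and> \<not> (\<exists>!GK :: real^('n + 'q)^'T. V0 ** GK = mat 1)"
    if r: "rank V0 = CARD('n + 'q)" and T: "CARD('T) \<ge> CARD('n) + CARD('q) + 1"
  proof -
    obtain GK :: "real^('n + 'q)^'T" where G: "V0 ** GK = mat 1"
      using r full_rank_surjective matrix_right_invertible_surjective by blast
    have "rank V0 \<noteq> CARD('T)" using r T by simp
    then obtain z where z: "z \<noteq> 0" "V0 *v z = 0"
      using matrix_nonfull_linear_equations_eq by blast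
    define GK2 :: "real^('n + 'q)^'T" where "GK2 = GK + (\<chi> i j. z $ i)"
    have "V0 ** (\<chi> i j. z $ i) = (0 :: real^('n + 'q)^('n + 'q))"
      using z(2) by (simp add: vec_eq_iff matrix_matrix_mult_def matrix_vector_mult_def)
    hence G2: "V0 ** GK2 = mat 1" using G by (simp add: GK2_def matrix_add_ldistrib)
    have "GK2 \<noteq> GK"
    proof
      assume "GK2 = GK"
      hence "(\<chi> i j. z $ i) = (0 :: real^('n + 'q)^'T)" by (simp add: GK2_def)
      hence "z = 0" by (simp add: vec_eq_iff)
      with z show False by simp
    qed
    thus ?thesis using G G2 by blast
  qed
  show ?thesis using P1 P2 by blast
qed

end
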